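(* Let $s\in(0,1)$, $p\ge1$, set $\kappa_*=\frac{N}{N-sp}$ if $sp<N$ and $\kappa_*=2$ if $sp\ge N$, and $\kappa=1+\frac{2(\kappa_*-1)}{p\kappa_*}$. There exists $C=C(s,p,N)>0$ such that for every $R>0$, $d\in(0,1)$, $t_1<t_2$, and every $u\in L^p(t_1,t_2;W^{s,p}(K_R))\cap L^\infty(t_1,t_2;L^2(K_R))$ with $u(\cdot,t)$ compactly supported in $K_{(1-d)R}$ for a.e. $t\in(t_1,t_2)$, $$\int_{t_1}^{t_2}\!\int_{K_R}|u|^{\kappa p}dxdt\le C\Big(R^{sp}\int_{t_1}^{t_2}\!\int_{K_R}\!\int_{K_R}\frac{|u(x,t)-u(y,t)|^p}{|x-y|^{N+sp}}dxdydt+\frac{1}{d^{N+sp}}\int_{t_1}^{t_2}\!\int_{K_R}|u|^pdxdt\Big)\Big(\operatorname*{ess\,sup}_{t_1<t<t_2}\frac{1}{|K_R|}\int_{K_R}|u(x,t)|^2dx\Big)^{\frac{\kappa_*-1}{\kappa_*}}.$$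
   Context: $W^{s,p}(K_R)=\{v\in L^p(K_R):\int_{K_R}\int_{K_R}|v(x)-v(y)|^p|x-y|^{-N-sp}dxdy<\infty\}$; $K_R$ and $K_{(1-d)R}$ are concentric open balls in $\mathbb R^N$. *)

theory Defs
  imports "HOL-Analysis.Analysis" "HOL-Probability.Essential_Supremum"
begin

definition kappa_star :: "nat \<Rightarrow> real \<Rightarrow> real \<Rightarrow> real" where
  "kappa_star N s p = (if s * p < real N then real N / (real N - s * p) else 2)"

definition kappa :: "nat \<Rightarrow> real \<Rightarrow> real \<Rightarrow> real" where
  "kappa N s p = 1 + 2 * (kappa_star N s p - 1) / (p * kappa_star N s p)"

definition par_gagliardo :: "('a::euclidean_space \<Rightarrow> real \<Rightarrow> real) \<Rightarrow> 'a set \<Rightarrow> real set \<Rightarrow> real \<Rightarrow> real \<Rightarrow> ennreal" where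
  "par_gagliardo u K I s p =
     (\<integral>\<^sup>+ t. (\<integral>\<^sup>+ x. (\<integral>\<^sup>+ y.
        ennreal (\<bar>u x t - u y t\<bar> powr p / norm (x - y) powr (real DIM('a) + s * p))
        * indicator K y \<partial>lborel) * indicator K x \<partial>lborel) * indicator I t \<partial>lborel)"

definition par_Lq :: "('a::euclidean_space \<Rightarrow> real \<Rightarrow> real) \<Rightarrow> 'a set \<Rightarrow> real set \<Rightarrow> real \<Rightarrow> ennreal" where
  "par_Lq u K I q =
     (\<integral>\<^sup>+ t. (\<integral>\<^sup>+ x. ennreal (\<bar>u x t\<bar> powr q) * indicator K x \<partial>lborel) * indicator I t \<partial>lborel)"

definition par_esssup_L2_avg :: "('a::euclidean_space \<Rightarrow> real \<Rightarrow> real) \<Rightarrow> 'a set \<Rightarrow> real set \<Rightarrow> ennreal" where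
  "par_esssup_L2_avg u K I =
     esssup (restrict_space lborel I)
       (\<lambda>t. (\<integral>\<^sup>+ x. ennreal ((u x t)\<^sup>2) * indicator K x \<partial>lborel) / ennreal (measure lborel K))"

end

theory Submission
  imports Defs
begin


lemma aux_sq: "(a::real) > 0 \<Longrightarrow> (a\<^sup>2) powr (al/2) = a powr al"
proof -
  assume a: "a > 0"
  have "a\<^sup>2 = a powr 2" using powr_numeral[of a "num.Bit0 num.One"] a by simp
  hence "(a\<^sup>2) powr (al/2) = a powr (2 * (al/2))" by (simp add: powr_powr)
  thus ?thesis by simp
qed

lemma aux_e9: "(a::real) > 0 \<Longrightarrow> Q > 0 \<Longrightarrow> w > 0 \<Longrightarrow> (8*Q/(w*a\<^sup>2)) powr (al/2) = 8 powr (al/2) * Q powr (al/2) / w powr (al/2) / a powr al"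
proof -
  assume a: "a > 0" and Q: "Q > 0" and w: "w > 0"
  have sq: "(a\<^sup>2) powr (al/2) = a powr al" using aux_sq[OF a] .
  show ?thesis using a Q w sq by (simp add: powr_divide powr_mult)
qed

lemma aux_f: "(Q::real) > 0 \<Longrightarrow> w > 0 \<Longrightarrow> d > 0 \<Longrightarrow> R > 0 \<Longrightarrow>
   (8*Q/(w*(d*R) powr n)) powr (al/2) = 8 powr (al/2) * Q powr (al/2) / w powr (al/2) / (d powr (al*n/2) * R powr (al*n/2))"
  by (simp add: powr_divide powr_mult powr_powr mult_ac)
lemma aux_C: "(w::real) > 0 \<Longrightarrow> p \<ge> 1 \<Longrightarrow> 1 \<le> 2 powr (p+1) * (1+1/w)"
proof -
  assume w: "w > 0" and p: "p \<ge> 1"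
  have "1 \<le> 2 powr (p+1)" using p by (intro ge_one_powr_ge_zero) auto
  moreover have "1 \<le> 1 + 1/w" using w by simp
  ultimately show ?thesis by (metis mult_mono' mult_1 zero_le_one order.trans)
qed
lemma aux_C2: "(w::real) > 0 \<Longrightarrow> p \<ge> 1 \<Longrightarrow> X \<ge> 0 \<Longrightarrow> 8 powr (al/2) * X \<le> 2 powr (p+1) * 8 powr (al/2) * (1 + 1/w) * X"
proof -
  assume w: "w > 0" and p: "p \<ge> 1" and X: "X \<ge> 0"
  have "8 powr (al/2) * X = 1 * (8 powr (al/2) * X)" by simp
  also have "\<dots> \<le> (2 powr (p+1) * (1+1/w)) * (8 powr (al/2) * X)"
    using aux_C[OF w p] X by (intro mult_right_mono) auto
  finally show ?thesis by (simp add: mult_ac)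
qed

lemma aux_e4: "(w::real) > 0 \<Longrightarrow> a > 0 \<Longrightarrow> X = 8*Q/(w*a\<^sup>2) \<Longrightarrow> 4 * Q / a\<^sup>2 = w * X / 2"
  by simp
lemma aux_h: "(b::real) > 0 \<Longrightarrow> A \<le> K * (E / b * r) * g \<Longrightarrow> A * b \<le> K * (E * r) * g"
proof -
  assume b: "b > 0" and h: "A \<le> K * (E / b * r) * g"
  have "A * b \<le> K * (E / b * r) * g * b" using h b by (intro mult_right_mono) auto
  also have "\<dots> = K * (E * r) * g" using b by simp
  finally show ?thesis .
qed
lemma aux_eq: "(w::real) > 0 \<Longrightarrow> W > 0 \<Longrightarrow> 2 * P / w * (E * (M * W * Ra) / W * Rb) * g = (2 * P) * E * (1/w) * (Ra * Rb) * M * g"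
  by simp

lemma aux_m1: "(K::real) \<ge> 0 \<Longrightarrow> g \<ge> 0 \<Longrightarrow> E \<ge> 0 \<Longrightarrow> W > 0 \<Longrightarrow> 0 \<le> q \<Longrightarrow> q \<le> q' \<Longrightarrow> 0 \<le> r \<Longrightarrow> r \<le> r'
  \<Longrightarrow> K*(E*q/W*r)*g \<le> K*(E*q'/W*r')*g"
proof -
  assume K: "K \<ge> 0" and g: "g \<ge> 0" and E: "E \<ge> 0" and W: "W > 0" and q: "0 \<le> q" "q \<le> q'" and r: "0 \<le> r" "r \<le> r'"
  have "E*q/W \<le> E*q'/W" using E W q by (simp add: divide_right_mono mult_left_mono)
  moreover have "0 \<le> E*q'/W" using E W q by simp
  ultimately have "E*q/W*r \<le> E*q'/W*r'" using mult_mono[of "E*q/W" "E*q'/W" r r'] r by simp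
  hence "K*(E*q/W*r) \<le> K*(E*q'/W*r')" using K by (rule mult_left_mono)
  thus ?thesis using g by (rule mult_right_mono)
qed
lemma aux_m2: "(E::real) \<ge> 0 \<Longrightarrow> W > 0 \<Longrightarrow> D > 0 \<Longrightarrow> q \<le> q' \<Longrightarrow> E*q/W/D \<le> E*q'/W/D"
proof -
  assume E: "E \<ge> 0" and W: "W > 0" and D: "D > 0" and q: "q \<le> q'"
  have "E*q \<le> E*q'" using mult_left_mono[OF q E] .
  hence "E*q/W \<le> E*q'/W" using divide_right_mono[of "E*q" "E*q'" W] W by simp
  thus ?thesis using divide_right_mono[of "E*q/W" "E*q'/W" D] D by simp
qed

lemma real_core:
  fixes a Q g w R d s p al n m :: real
  assumes a: "a > 0" and Q: "Q > 0" and g: "g \<ge> 0" and w: "w > 0" and R: "R > 0"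
    and d: "d > 0" "d < 1" and s: "s > 0" and p: "p \<ge> 1" and al: "al > 0" "al \<le> 2"
    and n: "n \<ge> 1" and aln: "al * n / 2 \<le> s * p"
    and Qm: "Q \<le> m * (w * R powr n)"
    and H: "\<And>r. 0 < r \<Longrightarrow> r \<le> d * R \<Longrightarrow>
              w * r powr n \<le> (2 / a) powr p * r powr (n + s * p) * g + 4 * Q / a\<^sup>2"
  shows "a powr (p + al) \<le> 2 powr (p+1) * 8 powr (al/2) * (1 + 1/w) * R powr (s*p) * m powr (al/2) * g
           + 2 powr (p+1) * 8 powr (al/2) * (1 + 1/w) * (1 / d powr (n + s*p)) * m powr (al/2) * a powr p"
proof -
  define C0 where "C0 = 2 powr (p+1) * 8 powr (al/2) * (1 + 1/w)"
  have C0pos: "C0 > 0" unfolding C0_def using w by (simp add: add_pos_pos)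
  have wRn: "w * R powr n > 0" using w R by simp
  have m: "m > 0"
  proof (rule ccontr)
    assume "\<not> m > 0"
    hence "m * (w * R powr n) \<le> 0" using wRn by (simp add: mult_nonpos_nonneg)
    thus False using Q Qm by simp
  qed
  have Qa: "Q powr (al/2) \<le> m powr (al/2) * w powr (al/2) * R powr (al*n/2)"
  proof -
    have "Q powr (al/2) \<le> (m * (w * R powr n)) powr (al/2)"
      using Qm Q al by (intro powr_mono2) auto
    also have "\<dots> = m powr (al/2) * w powr (al/2) * R powr (al*n/2)"
      using m w R by (simp add: powr_mult powr_powr mult_ac)
    finally show ?thesis .
  qed
  define r0 where "r0 = (8*Q/(w*a\<^sup>2)) powr (1/n)"
  have r0pos: "r0 > 0" unfolding r0_def using Q w a by simp
  have r0n: "r0 powr n = 8*Q/(w*a\<^sup>2)"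
    unfolding r0_def using Q w a n by (simp add: powr_powr)
  have ap: "a powr (p+al) = a powr p * a powr al" by (simp add: powr_add)
  show ?thesis
  proof (cases "r0 \<le> d * R")
    case True
    have h0: "w * r0 powr n \<le> (2 / a) powr p * r0 powr (n + s * p) * g + 4 * Q / a\<^sup>2"
      using H[OF r0pos True] .
    have e4: "4 * Q / a\<^sup>2 = w * r0 powr n / 2" using aux_e4[OF w a r0n] .
    have e5: "r0 powr (n + s * p) = r0 powr n * r0 powr (s*p)" by (simp add: powr_add)
    have "w * r0 powr n / 2 \<le> r0 powr n * ((2 / a) powr p * r0 powr (s*p) * g)"
      using h0 unfolding e4 e5 by (simp add: mult_ac)
    hence h1: "w / 2 \<le> (2 / a) powr p * r0 powr (s*p) * g"
      using r0pos by (simp add: mult_ac)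
    have e6: "a powr p * (2/a) powr p = 2 powr p" using a by (simp add: powr_divide)
    have "a powr p = (2 * a powr p / w) * (w / 2)" using w by simp
    also have "\<dots> \<le> (2 * a powr p / w) * ((2 / a) powr p * r0 powr (s*p) * g)"
      using h1 w by (intro mult_left_mono) auto
    also have "\<dots> = 2 * (a powr p * (2/a) powr p) / w * r0 powr (s*p) * g" by (simp add: mult_ac)
    also have "\<dots> = 2 * 2 powr p / w * r0 powr (s*p) * g" unfolding e6 ..
    finally have h2a: "a powr p \<le> 2 * 2 powr p / w * r0 powr (s*p) * g" .
    have e7: "r0 powr (s*p) = r0 powr (al*n/2) * r0 powr (s*p - al*n/2)"
      by (simp add: powr_add[symmetric])
    have e8: "r0 powr (al*n/2) = (8*Q/(w*a\<^sup>2)) powr (al/2)"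
    proof -
      have "r0 powr (al*n/2) = (r0 powr n) powr (al/2)" by (simp add: powr_powr mult_ac)
      thus ?thesis using r0n by simp
    qed
    have e9: "(8*Q/(w*a\<^sup>2)) powr (al/2) = 8 powr (al/2) * Q powr (al/2) / w powr (al/2) / a powr al"
      using aux_e9[OF a Q w] .
    have h2: "a powr p \<le> 2 * 2 powr p / w * (8 powr (al/2) * Q powr (al/2) / w powr (al/2) / a powr al
         * r0 powr (s*p - al*n/2)) * g"
      using h2a unfolding e7 e8 e9 .
    have h3: "r0 powr (s*p - al*n/2) \<le> R powr (s*p - al*n/2)"
    proof -
      have "d * R \<le> 1 * R" using d R by (intro mult_right_mono) auto
      hence "r0 \<le> R" using True by simp
      thus ?thesis using r0pos aln by (intro powr_mono2) auto
    qed
    have "a powr (p+al) \<le> 2 * 2 powr p / w * (8 powr (al/2) * Q powr (al/2) / w powr (al/2)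
         * r0 powr (s*p - al*n/2)) * g"
      unfolding ap using aux_h[OF _ h2] a by simp
    also have "\<dots> \<le> 2 * 2 powr p / w * (8 powr (al/2) * (m powr (al/2) * w powr (al/2) * R powr (al*n/2)) / w powr (al/2)
         * R powr (s*p - al*n/2)) * g"
      using w g Qa h3 by (intro aux_m1) auto
    also have "\<dots> = (2 * 2 powr p) * 8 powr (al/2) * (1/w) * (R powr (al*n/2) * R powr (s*p - al*n/2)) * m powr (al/2) * g"
      using aux_eq[of w "w powr (al/2)"] w by simp
    also have "\<dots> = 2 powr (p+1) * 8 powr (al/2) * (1/w) * R powr (s*p) * m powr (al/2) * g"
    proof -
      have e1: "2 * 2 powr p = 2 powr (p+1)" by (simp add: powr_add)
      have e2: "R powr (al*n/2) * R powr (s*p - al*n/2) = R powr (s*p)" by (simp add: powr_add[symmetric])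
      show ?thesis by (simp only: e1 e2)
    qed
    also have "\<dots> \<le> C0 * R powr (s*p) * m powr (al/2) * g"
      unfolding C0_def using w g by (intro mult_right_mono mult_left_mono) auto
    also have "\<dots> \<le> C0 * R powr (s*p) * m powr (al/2) * g + C0 * (1 / d powr (n + s*p)) * m powr (al/2) * a powr p"
      using C0pos d by simp
    finally show ?thesis unfolding C0_def .
  next
    case False
    have "(d*R) powr n < r0 powr n" using False d R n by (intro powr_less_mono2) auto
    hence "(d*R) powr n * (w*a\<^sup>2) < 8*Q" using r0n a w by (simp add: pos_less_divide_eq)
    hence "a\<^sup>2 * (w*(d*R) powr n) < 8*Q" by (simp add: mult_ac)
    hence "a\<^sup>2 < 8*Q/(w*(d*R) powr n)" using w d R by (simp add: pos_less_divide_eq)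
    hence "(a\<^sup>2) powr (al/2) \<le> (8*Q/(w*(d*R) powr n)) powr (al/2)"
      using al by (intro powr_mono2) auto
    moreover have "(a\<^sup>2) powr (al/2) = a powr al" using aux_sq[OF a] .
    moreover have "(8*Q/(w*(d*R) powr n)) powr (al/2) = 8 powr (al/2) * Q powr (al/2) / w powr (al/2) / (d powr (al*n/2) * R powr (al*n/2))"
      using aux_f[OF Q w d(1) R] .
    ultimately have "a powr al \<le> 8 powr (al/2) * Q powr (al/2) / w powr (al/2) / (d powr (al*n/2) * R powr (al*n/2))"
      by simp
    also have "\<dots> \<le> 8 powr (al/2) * (m powr (al/2) * w powr (al/2) * R powr (al*n/2)) / w powr (al/2) / (d powr (al*n/2) * R powr (al*n/2))"
      using Qa w d R by (intro aux_m2) auto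
    also have "\<dots> = 8 powr (al/2) * m powr (al/2) / d powr (al*n/2)" using w R by simp
    also have "\<dots> \<le> 8 powr (al/2) * m powr (al/2) / d powr (n + s*p)"
    proof -
      have "d powr (n + s*p) \<le> d powr (al*n/2)"
      proof -
        have "al*n/2 \<le> n + s*p" using aln n by linarith
        thus ?thesis using d by (intro powr_mono') auto
      qed
      thus ?thesis using d m by (intro divide_left_mono) auto
    qed
    also have "\<dots> = 8 powr (al/2) * (m powr (al/2) / d powr (n + s*p))" by simp
    also have "\<dots> \<le> C0 * (m powr (al/2) / d powr (n + s*p))"
      unfolding C0_def using w p d by (intro aux_C2) auto
    also have "\<dots> = C0 * (1 / d powr (n + s*p)) * m powr (al/2)" by simp
    finally have "a powr p * a powr al \<le> a powr p * (C0 * (1 / d powr (n + s*p)) * m powr (al/2))"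
      by (intro mult_left_mono) auto
    hence "a powr (p+al) \<le> C0 * (1 / d powr (n + s*p)) * m powr (al/2) * a powr p"
      unfolding ap by (simp add: mult_ac)
    also have "\<dots> \<le> C0 * R powr (s*p) * m powr (al/2) * g + C0 * (1 / d powr (n + s*p)) * m powr (al/2) * a powr p"
      using C0pos g by simp
    finally show ?thesis unfolding C0_def .
  qed
qed
lemma point_measure:
  fixes v :: "'a::euclidean_space \<Rightarrow> real" and K :: "'a set" and p s r :: real
  assumes v[measurable]: "v \<in> borel_measurable borel" and K[measurable]: "K \<in> sets borel"
    and r: "r > 0" and sub: "cball x r \<subseteq> K" and a: "0 < \<bar>v x\<bar>"
    and p: "p > 0" and sp: "s * p \<ge> 0"
    and Qfin: "(\<integral>\<^sup>+y. ennreal ((v y)\<^sup>2) * indicator K y \<partial>lborel) \<noteq> \<infinity>"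
    and Gfin: "(\<integral>\<^sup>+y. ennreal (\<bar>v x - v y\<bar> powr p / norm (x - y) powr (real DIM('a) + s * p)) * indicator K y \<partial>lborel) \<noteq> \<infinity>"
  shows "unit_ball_vol DIM('a) * r powr DIM('a) \<le>
     (2 / \<bar>v x\<bar>) powr p * r powr (DIM('a) + s * p) *
       enn2real (\<integral>\<^sup>+y. ennreal (\<bar>v x - v y\<bar> powr p / norm (x - y) powr (real DIM('a) + s * p)) * indicator K y \<partial>lborel)
     + 4 * enn2real (\<integral>\<^sup>+y. ennreal ((v y)\<^sup>2) * indicator K y \<partial>lborel) / \<bar>v x\<bar>\<^sup>2"
proof -
  define a where "a = \<bar>v x\<bar>"
  define e where "e = real DIM('a) + s * p"
  have e: "e > 0" unfolding e_def using sp by (simp add: add_pos_nonneg)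
  define Q where "Q = (\<integral>\<^sup>+y. ennreal ((v y)\<^sup>2) * indicator K y \<partial>lborel)"
  define G where "G = (\<integral>\<^sup>+y. ennreal (\<bar>v x - v y\<bar> powr p / norm (x - y) powr e) * indicator K y \<partial>lborel)"
  have apos: "a > 0" using a unfolding a_def .
  define E1 where "E1 = {y \<in> cball x r. a/2 \<le> \<bar>v x - v y\<bar>}"
  define E2 where "E2 = {y \<in> cball x r. a/2 \<le> \<bar>v y\<bar>}"
  have cb[measurable]: "cball x r \<in> sets borel" by (simp add: borel_closed)
  have E1m[measurable]: "E1 \<in> sets borel" unfolding E1_def by measurable
  have E2m[measurable]: "E2 \<in> sets borel" unfolding E2_def by measurable
  have cov: "cball x r \<subseteq> E1 \<union> E2"
  proof
    fix y assume y: "y \<in> cball x r"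
    show "y \<in> E1 \<union> E2"
    proof (cases "a/2 \<le> \<bar>v y\<bar>")
      case True thus ?thesis using y unfolding E2_def by auto
    next
      case False
      hence "a/2 \<le> \<bar>v x - v y\<bar>" unfolding a_def by linarith
      thus ?thesis using y unfolding E1_def by auto
    qed
  qed
  have cbm: "emeasure lborel (cball x r) = ennreal (unit_ball_vol DIM('a) * r ^ DIM('a))"
    using r by (intro emeasure_cball) simp
  have hB: "emeasure lborel (cball x r) \<le> emeasure lborel E1 + emeasure lborel E2"
  proof -
    have "emeasure lborel (cball x r) \<le> emeasure lborel (E1 \<union> E2)"
      using cov by (intro emeasure_mono) auto
    also have "\<dots> \<le> emeasure lborel E1 + emeasure lborel E2"
      by (intro emeasure_subadditive) auto
    finally show ?thesis .
  qed
  have E1fin: "emeasure lborel E1 \<noteq> \<infinity>"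
  proof -
    have "emeasure lborel E1 \<le> emeasure lborel (cball x r)" unfolding E1_def by (intro emeasure_mono) auto
    thus ?thesis using cbm by (auto simp: top_unique)
  qed
  have E2fin: "emeasure lborel E2 \<noteq> \<infinity>"
  proof -
    have "emeasure lborel E2 \<le> emeasure lborel (cball x r)" unfolding E2_def by (intro emeasure_mono) auto
    thus ?thesis using cbm by (auto simp: top_unique)
  qed
  have h1: "ennreal ((a/2) powr p) * emeasure lborel E1 \<le> ennreal (r powr e) * G"
  proof -
    have "ennreal ((a/2) powr p) * emeasure lborel E1 = (\<integral>\<^sup>+y. ennreal ((a/2) powr p) * indicator E1 y \<partial>lborel)"
      by (simp add: nn_integral_cmult_indicator)
    also have "\<dots> \<le> (\<integral>\<^sup>+y. ennreal (r powr e) * (ennreal (\<bar>v x - v y\<bar> powr p / norm (x - y) powr e) * indicator K y) \<partial>lborel)"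
    proof (intro nn_integral_mono)
      fix y
      show "ennreal ((a/2) powr p) * indicator E1 y \<le> ennreal (r powr e) * (ennreal (\<bar>v x - v y\<bar> powr p / norm (x - y) powr e) * indicator K y)"
      proof (cases "y \<in> E1")
        case False thus ?thesis by simp
      next
        case True
        hence y: "y \<in> cball x r" "a/2 \<le> \<bar>v x - v y\<bar>" unfolding E1_def by auto
        hence yK: "y \<in> K" using sub by auto
        have dpos: "\<bar>v x - v y\<bar> > 0" using y(2) apos by linarith
        hence "y \<noteq> x" by auto
        hence npos: "norm (x - y) > 0" by simp
        have nle: "norm (x - y) \<le> r" using y(1) by (simp add: dist_norm)
        have "(a/2) powr p \<le> \<bar>v x - v y\<bar> powr p" using y(2) apos p by (intro powr_mono2) auto
        also have "\<dots> = \<bar>v x - v y\<bar> powr p * 1" by simp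
        also have "\<dots> \<le> \<bar>v x - v y\<bar> powr p * (r powr e / norm (x - y) powr e)"
        proof -
          have "norm (x - y) powr e \<le> r powr e" using nle npos e by (intro powr_mono2) auto
          hence "1 \<le> r powr e / norm (x - y) powr e" using npos by simp
          thus ?thesis by (intro mult_left_mono) auto
        qed
        also have "\<dots> = r powr e * (\<bar>v x - v y\<bar> powr p / norm (x - y) powr e)" by simp
        finally have "(a/2) powr p \<le> r powr e * (\<bar>v x - v y\<bar> powr p / norm (x - y) powr e)" .
        hence "ennreal ((a/2) powr p) \<le> ennreal (r powr e) * ennreal (\<bar>v x - v y\<bar> powr p / norm (x - y) powr e)"
          by (simp add: ennreal_mult[symmetric])
        thus ?thesis using True yK by simp
      qed
    qed
    also have "\<dots> = ennreal (r powr e) * G"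
      unfolding G_def by (intro nn_integral_cmult) measurable
    finally show ?thesis .
  qed
  have h2: "ennreal ((a/2)\<^sup>2) * emeasure lborel E2 \<le> Q"
  proof -
    have "ennreal ((a/2)\<^sup>2) * emeasure lborel E2 = (\<integral>\<^sup>+y. ennreal ((a/2)\<^sup>2) * indicator E2 y \<partial>lborel)"
      by (simp add: nn_integral_cmult_indicator)
    also have "\<dots> \<le> Q" unfolding Q_def
    proof (intro nn_integral_mono)
      fix y
      show "ennreal ((a/2)\<^sup>2) * indicator E2 y \<le> ennreal ((v y)\<^sup>2) * indicator K y"
      proof (cases "y \<in> E2")
        case False thus ?thesis by simp
      next
        case True
        hence y: "y \<in> cball x r" "a/2 \<le> \<bar>v y\<bar>" unfolding E2_def by auto
        hence yK: "y \<in> K" using sub by auto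
        have "(a/2)\<^sup>2 \<le> \<bar>v y\<bar>\<^sup>2" using y(2) apos by (intro power_mono) auto
        thus ?thesis using True yK by simp
      qed
    qed
    finally show ?thesis .
  qed
  define m1 where "m1 = measure lborel E1"
  define m2 where "m2 = measure lborel E2"
  have em1: "emeasure lborel E1 = ennreal m1" unfolding m1_def using E1fin by (simp add: emeasure_eq_ennreal_measure)
  have em2: "emeasure lborel E2 = ennreal m2" unfolding m2_def using E2fin by (simp add: emeasure_eq_ennreal_measure)
  have m1: "m1 \<ge> 0" "m2 \<ge> 0" unfolding m1_def m2_def by auto
  define g where "g = enn2real G"
  define q where "q = enn2real Q"
  have Gg: "G = ennreal g" unfolding g_def G_def e_def using Gfin by (simp add: less_top)
  have Qq: "Q = ennreal q" unfolding q_def Q_def using Qfin by (simp add: less_top)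
  have g: "g \<ge> 0" "q \<ge> 0" unfolding g_def q_def by auto
  have r1: "(a/2) powr p * m1 \<le> r powr e * g"
    using h1 unfolding em1 Gg using m1 g by (simp add: ennreal_mult[symmetric])
  have r2: "(a/2)\<^sup>2 * m2 \<le> q"
    using h2 unfolding em2 Qq using m1 g by (simp add: ennreal_mult[symmetric])
  have r3: "unit_ball_vol DIM('a) * r ^ DIM('a) \<le> m1 + m2"
    using hB unfolding cbm em1 em2 using m1 by (simp add: ennreal_plus[symmetric] del: ennreal_plus)
  have "m1 \<le> (2/a) powr p * r powr e * g"
  proof -
    have pp: "(a/2) powr p > 0" using apos by simp
    have "m1 \<le> r powr e * g / (a/2) powr p" using r1 pp by (simp add: pos_le_divide_eq mult.commute)
    also have "r powr e * g / (a/2) powr p = (2/a) powr p * r powr e * g"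
      using apos by (simp add: powr_divide)
    finally show ?thesis .
  qed
  moreover have "m2 \<le> 4 * q / a\<^sup>2"
  proof -
    have pp: "(a/2)\<^sup>2 > 0" using apos by simp
    have "m2 \<le> q / (a/2)\<^sup>2" using r2 pp by (simp add: pos_le_divide_eq mult.commute)
    also have "q / (a/2)\<^sup>2 = 4 * q / a\<^sup>2" by (simp add: power_divide)
    finally show ?thesis .
  qed
  ultimately have "unit_ball_vol DIM('a) * r ^ DIM('a) \<le> (2/a) powr p * r powr e * g + 4 * q / a\<^sup>2"
    using r3 by linarith
  moreover have "r powr DIM('a) = r ^ DIM('a)" using r by (simp add: powr_realpow)
  ultimately show ?thesis unfolding a_def g_def q_def G_def Q_def e_def by simp
qed
lemma x_level:
  fixes v :: "'a::euclidean_space \<Rightarrow> real" and x0 :: 'a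
  assumes v[measurable]: "v \<in> borel_measurable borel"
    and R: "R > 0" and d: "0 < d" "d < 1" and s: "s > 0" and p: "p \<ge> 1"
    and al: "al > 0" "al \<le> 2" and aln: "al * real DIM('a) / 2 \<le> s * p"
    and S: "S \<subseteq> ball x0 ((1-d)*R)"
    and supp: "AE x in lborel. x \<in> ball x0 R - S \<longrightarrow> v x = 0"
    and m: "m \<ge> 0"
    and Qm: "(\<integral>\<^sup>+x. ennreal ((v x)\<^sup>2) * indicator (ball x0 R) x \<partial>lborel)
               \<le> ennreal (m * (unit_ball_vol DIM('a) * R powr DIM('a)))"
  shows "(\<integral>\<^sup>+x. ennreal (\<bar>v x\<bar> powr (p+al)) * indicator (ball x0 R) x \<partial>lborel) \<le>
     ennreal (2 powr (p+1) * 8 powr (al/2) * (1 + 1/unit_ball_vol DIM('a)) * R powr (s*p) * m powr (al/2)) *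
       (\<integral>\<^sup>+x. (\<integral>\<^sup>+y. ennreal (\<bar>v x - v y\<bar> powr p / norm (x - y) powr (real DIM('a) + s*p))
          * indicator (ball x0 R) y \<partial>lborel) * indicator (ball x0 R) x \<partial>lborel)
     + ennreal (2 powr (p+1) * 8 powr (al/2) * (1 + 1/unit_ball_vol DIM('a)) * (1 / d powr (real DIM('a) + s*p)) * m powr (al/2)) *
       (\<integral>\<^sup>+x. ennreal (\<bar>v x\<bar> powr p) * indicator (ball x0 R) x \<partial>lborel)"
proof -
  define K where "K = ball x0 R"
  define w where "w = unit_ball_vol DIM('a)"
  define n where "n = real DIM('a)"
  define C0 where "C0 = 2 powr (p+1) * 8 powr (al/2) * (1 + 1/w)"
  define A where "A = C0 * R powr (s*p) * m powr (al/2)"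
  define B where "B = C0 * (1 / d powr (n + s*p)) * m powr (al/2)"
  have w: "w > 0" unfolding w_def by simp
  have n: "n \<ge> 1" unfolding n_def by simp
  have Km[measurable]: "K \<in> sets borel" unfolding K_def by simp
  have Ko: "open K" unfolding K_def by simp
  have v'[measurable]: "v \<in> borel_measurable lborel" using v by simp
  define Gin where "Gin x = (\<integral>\<^sup>+y. ennreal (\<bar>v x - v y\<bar> powr p / norm (x - y) powr (n + s*p)) * indicator K y \<partial>lborel)" for x
  define Q where "Q = (\<integral>\<^sup>+x. ennreal ((v x)\<^sup>2) * indicator K x \<partial>lborel)"
  have Ginm[measurable]: "Gin \<in> borel_measurable lborel"
  proof -
    have "(\<lambda>x. \<integral>\<^sup>+y. ennreal (\<bar>v x - v y\<bar> powr p / norm (x - y) powr (n + s*p)) * indicator K y \<partial>lborel) \<in> borel_measurable lborel"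
    proof -
      have vv: "(\<lambda>z. v (fst z)) \<in> borel_measurable (lborel \<Otimes>\<^sub>M lborel)" "(\<lambda>z. v (snd z)) \<in> borel_measurable (lborel \<Otimes>\<^sub>M lborel)"
        by measurable
      note [measurable] = vv
      show ?thesis by measurable
    qed
    thus ?thesis unfolding Gin_def .
  qed
  have Aeq: "ennreal A * (\<integral>\<^sup>+x. Gin x * indicator K x \<partial>lborel) + ennreal B * (\<integral>\<^sup>+x. ennreal (\<bar>v x\<bar> powr p) * indicator K x \<partial>lborel)
      = (\<integral>\<^sup>+x. (ennreal A * Gin x + ennreal B * ennreal (\<bar>v x\<bar> powr p)) * indicator K x \<partial>lborel)"
  proof -
    have "(\<integral>\<^sup>+x. (ennreal A * Gin x + ennreal B * ennreal (\<bar>v x\<bar> powr p)) * indicator K x \<partial>lborel)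
        = (\<integral>\<^sup>+x. ennreal A * (Gin x * indicator K x) + ennreal B * (ennreal (\<bar>v x\<bar> powr p) * indicator K x) \<partial>lborel)"
      by (simp add: distrib_right mult.assoc)
    also have "\<dots> = (\<integral>\<^sup>+x. ennreal A * (Gin x * indicator K x) \<partial>lborel) + (\<integral>\<^sup>+x. ennreal B * (ennreal (\<bar>v x\<bar> powr p) * indicator K x) \<partial>lborel)"
      by (intro nn_integral_add) measurable
    also have "\<dots> = ennreal A * (\<integral>\<^sup>+x. Gin x * indicator K x \<partial>lborel) + ennreal B * (\<integral>\<^sup>+x. ennreal (\<bar>v x\<bar> powr p) * indicator K x \<partial>lborel)"
      by (subst nn_integral_cmult, measurable)+
    finally show ?thesis by simp
  qed
  have Qle: "Q \<le> ennreal (m * (w * R powr n))" using Qm unfolding Q_def K_def w_def n_def .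
  have Qfin: "Q \<noteq> \<infinity>" using Qle by (auto simp: top_unique)
  have Q0: "Q = 0 \<longrightarrow> (AE x in lborel. x \<in> K \<longrightarrow> v x = 0)"
  proof
    assume "Q = 0"
    hence "AE x in lborel. ennreal ((v x)\<^sup>2) * indicator K x = 0"
      unfolding Q_def by (subst nn_integral_0_iff_AE[symmetric]) (measurable, simp add: Ko)
    thus "AE x in lborel. x \<in> K \<longrightarrow> v x = 0"
      by eventually_elim (auto simp: indicator_def)
  qed
  have AEall: "AE x in lborel. (x \<in> K - S \<longrightarrow> v x = 0) \<and> (Q = 0 \<longrightarrow> x \<in> K \<longrightarrow> v x = 0)"
  proof (cases "Q = 0")
    case True
    with Q0 have "AE x in lborel. x \<in> K \<longrightarrow> v x = 0" by simp
    with supp show ?thesis unfolding K_def by eventually_elim auto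
  next
    case False
    show ?thesis using supp False unfolding K_def by (auto elim!: eventually_mono)
  qed
  have main: "AE x in lborel. ennreal (\<bar>v x\<bar> powr (p+al)) * indicator K x
      \<le> (ennreal A * Gin x + ennreal B * ennreal (\<bar>v x\<bar> powr p)) * indicator K x"
    using AEall
  proof eventually_elim
    case (elim x)
    show ?case
    proof (cases "x \<in> K \<and> v x \<noteq> 0")
      case False
      thus ?thesis by (auto simp: indicator_def)
    next
      case True
      hence xK: "x \<in> K" and vx: "v x \<noteq> 0" by auto
      hence xS: "x \<in> S" using elim by auto
      hence xb: "dist x0 x < (1-d)*R" using S by auto
      have Qn0: "Q \<noteq> 0" using elim xK vx by auto
      define q where "q = enn2real Q"
      have Qq: "Q = ennreal q" unfolding q_def using Qfin by (simp add: less_top)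
      have q0: "q \<ge> 0" unfolding q_def by simp
      have q: "q > 0" using Qn0 q0 unfolding Qq by (metis ennreal_0 less_eq_real_def)
      have qm: "q \<le> m * (w * R powr n)" using Qle unfolding Qq using m w R by (simp add: ennreal_le_iff)
      have mpos: "m > 0"
      proof (rule ccontr)
        assume "\<not> m > 0" hence "m = 0" using m by simp
        thus False using qm q by simp
      qed
      have Apos: "A > 0" unfolding A_def C0_def using mpos R w by (simp add: add_pos_pos)
      have Bnn: "B \<ge> 0" unfolding B_def C0_def using mpos d w by (simp add: add_pos_pos)
      show ?thesis
      proof (cases "Gin x = \<infinity>")
        case True
        thus ?thesis using xK Apos by (simp add: ennreal_mult_top)
      next
        case False
        define g where "g = enn2real (Gin x)"
        have Gg: "Gin x = ennreal g" unfolding g_def using False by (simp add: less_top)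
        have g: "g \<ge> 0" unfolding g_def by simp
        have a: "\<bar>v x\<bar> > 0" using vx by simp
        have H: "w * r powr n \<le> (2 / \<bar>v x\<bar>) powr p * r powr (n + s * p) * g + 4 * q / \<bar>v x\<bar>\<^sup>2"
          if r: "0 < r" "r \<le> d * R" for r
        proof -
          have sub: "cball x r \<subseteq> K"
          proof
            fix y assume "y \<in> cball x r"
            hence "dist x y \<le> r" by simp
            moreover have "(1-d)*R = R - d*R" by (simp add: algebra_simps)
            ultimately have "dist x0 y < R" using xb r dist_triangle[of x0 y x] by linarith
            thus "y \<in> K" unfolding K_def by simp
          qed
          have "w * r powr n \<le> (2 / \<bar>v x\<bar>) powr p * r powr (n + s * p) *
             enn2real (\<integral>\<^sup>+y. ennreal (\<bar>v x - v y\<bar> powr p / norm (x - y) powr (real DIM('a) + s * p)) * indicator K y \<partial>lborel)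
             + 4 * enn2real (\<integral>\<^sup>+y. ennreal ((v y)\<^sup>2) * indicator K y \<partial>lborel) / \<bar>v x\<bar>\<^sup>2"
            unfolding w_def n_def
            by (rule point_measure[OF v Km r(1) sub a]) (use p s Qfin False in \<open>auto simp: Q_def Gin_def n_def\<close>)
          thus ?thesis unfolding g_def q_def Gin_def Q_def n_def .
        qed
        have core: "\<bar>v x\<bar> powr (p + al) \<le> C0 * R powr (s*p) * m powr (al/2) * g
           + C0 * (1 / d powr (n + s*p)) * m powr (al/2) * \<bar>v x\<bar> powr p"
          unfolding C0_def by (rule real_core[OF a q g w R d s p al n _ qm H]) (use aln n_def in auto)
        have "ennreal (\<bar>v x\<bar> powr (p + al)) \<le> ennreal (A * g + B * \<bar>v x\<bar> powr p)"
          using core unfolding A_def B_def by (intro ennreal_leI) simp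
        also have "\<dots> = ennreal A * Gin x + ennreal B * ennreal (\<bar>v x\<bar> powr p)"
          unfolding Gg using Apos Bnn g by (subst ennreal_plus) (auto simp: ennreal_mult)
        finally show ?thesis using xK by simp
      qed
    qed
  qed
  have "(\<integral>\<^sup>+x. ennreal (\<bar>v x\<bar> powr (p+al)) * indicator K x \<partial>lborel)
     \<le> (\<integral>\<^sup>+x. (ennreal A * Gin x + ennreal B * ennreal (\<bar>v x\<bar> powr p)) * indicator K x \<partial>lborel)"
    by (rule nn_integral_mono_AE[OF main])
  also have "\<dots> = ennreal A * (\<integral>\<^sup>+x. Gin x * indicator K x \<partial>lborel) + ennreal B * (\<integral>\<^sup>+x. ennreal (\<bar>v x\<bar> powr p) * indicator K x \<partial>lborel)"
    using Aeq by simp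
  finally show ?thesis unfolding A_def B_def C0_def Gin_def K_def w_def n_def .
qed

lemma kappa_facts:
  fixes s p :: real and N :: nat
  assumes s: "0 < s" and p: "1 \<le> p" and N: "N \<ge> 1"
  defines "al \<equiv> 2 * (kappa_star N s p - 1) / kappa_star N s p"
  shows "al > 0" "al \<le> 2" "al * real N / 2 \<le> s * p" "kappa N s p * p = p + al"
    "(kappa_star N s p - 1) / kappa_star N s p = al / 2"
proof -
  have sp: "s * p > 0" using s p by simp
  have Npos: "real N > 0" using N by simp
  have ks: "kappa_star N s p > 1 \<and> al \<le> 2 \<and> al * real N / 2 \<le> s * p"
  proof (cases "s * p < real N")
    case True
    hence k: "kappa_star N s p = real N / (real N - s * p)" unfolding kappa_star_def by simp
    have pos: "real N - s * p > 0" using True by simp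
    have k1: "kappa_star N s p > 1" unfolding k using pos sp by (simp add: field_simps)
    have aeq: "al = 2 * (s * p) / real N" unfolding al_def k using pos Npos by (simp add: field_simps)
    have a1: "al \<le> 2" unfolding aeq using True Npos by (simp add: pos_divide_le_eq)
    have a2: "al * real N / 2 \<le> s * p" unfolding aeq using Npos by simp
    show ?thesis using k1 a1 a2 by simp
  next
    case False
    hence k: "kappa_star N s p = 2" unfolding kappa_star_def by simp
    have "al = 1" unfolding al_def k by simp
    thus ?thesis using k False by simp
  qed
  show "al > 0" unfolding al_def using ks by simp
  show "al \<le> 2" "al * real N / 2 \<le> s * p" using ks by auto
  show "kappa N s p * p = p + al" unfolding kappa_def al_def using p ks by (simp add: field_simps)
  show "(kappa_star N s p - 1) / kappa_star N s p = al / 2" unfolding al_def using ks by (simp add: field_simps)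
qed

theorem propositionA3:
  fixes s p :: real
  assumes "0 < s" "s < 1" "1 \<le> p"
  shows "\<exists>C>0. \<forall>(x0::'a::euclidean_space) R d t1 t2 (u::'a \<Rightarrow> real \<Rightarrow> real).
    0 < R \<and> 0 < d \<and> d < 1 \<and> t1 < t2
    \<and> (\<lambda>z. u (fst z) (snd z)) \<in> borel_measurable (restrict_space borel (ball x0 R \<times> {t1<..<t2}))
    \<and> par_Lq u (ball x0 R) {t1<..<t2} p < \<infinity>
    \<and> par_gagliardo u (ball x0 R) {t1<..<t2} s p < \<infinity>
    \<and> par_esssup_L2_avg u (ball x0 R) {t1<..<t2} < \<infinity>
    \<and> (AE t in lborel. t \<in> {t1<..<t2} \<longrightarrow>
         (\<exists>S. compact S \<and> S \<subseteq> ball x0 ((1 - d) * R) \<and>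
              (AE x in lborel. x \<in> ball x0 R - S \<longrightarrow> u x t = 0)))
    \<longrightarrow> par_Lq u (ball x0 R) {t1<..<t2} (kappa DIM('a) s p * p)
        \<le> ennreal (C * (R powr (s * p) * enn2real (par_gagliardo u (ball x0 R) {t1<..<t2} s p)
                   + 1 / d powr (real DIM('a) + s * p) * enn2real (par_Lq u (ball x0 R) {t1<..<t2} p))
             * enn2real (par_esssup_L2_avg u (ball x0 R) {t1<..<t2})
                 powr ((kappa_star DIM('a) s p - 1) / kappa_star DIM('a) s p))"
proof -
  have s: "0 < s" and p: "1 \<le> p" using assms by auto
  define N where "N = DIM('a)"
  define al where "al = 2 * (kappa_star N s p - 1) / kappa_star N s p"
  have N1: "N \<ge> 1" unfolding N_def by simp
  note kf = kappa_facts[OF s p N1, folded al_def]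
  define w where "w = unit_ball_vol N"
  have w: "w > 0" unfolding w_def by simp
  define C where "C = 2 powr (p+1) * 8 powr (al/2) * (1 + 1/w)"
  have Cpos: "C > 0" unfolding C_def using w by (simp add: add_pos_pos)
  show ?thesis
  proof (intro exI[of _ C] conjI allI impI Cpos)
    fix x0 :: 'a and R d t1 t2 :: real and u :: "'a \<Rightarrow> real \<Rightarrow> real"
    assume H: "0 < R \<and> 0 < d \<and> d < 1 \<and> t1 < t2
    \<and> (\<lambda>z. u (fst z) (snd z)) \<in> borel_measurable (restrict_space borel (ball x0 R \<times> {t1<..<t2}))
    \<and> par_Lq u (ball x0 R) {t1<..<t2} p < \<infinity>
    \<and> par_gagliardo u (ball x0 R) {t1<..<t2} s p < \<infinity>
    \<and> par_esssup_L2_avg u (ball x0 R) {t1<..<t2} < \<infinity>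
    \<and> (AE t in lborel. t \<in> {t1<..<t2} \<longrightarrow>
         (\<exists>S. compact S \<and> S \<subseteq> ball x0 ((1 - d) * R) \<and>
              (AE x in lborel. x \<in> ball x0 R - S \<longrightarrow> u x t = 0)))"
    define K where "K = ball x0 R"
    define I where "I = {t1<..<t2}"
    have R: "R > 0" and d: "0 < d" "d < 1" using H by auto
    have fm: "(\<lambda>z. u (fst z) (snd z)) \<in> borel_measurable (restrict_space borel (K \<times> I))"
      using H unfolding K_def I_def by auto
    have Lfin: "par_Lq u K I p < \<infinity>" and Gfin: "par_gagliardo u K I s p < \<infinity>"
      and Mfin: "par_esssup_L2_avg u K I < \<infinity>" using H unfolding K_def I_def by auto
    have supp: "AE t in lborel. t \<in> I \<longrightarrow>
         (\<exists>S. compact S \<and> S \<subseteq> ball x0 ((1 - d) * R) \<and>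
              (AE x in lborel. x \<in> K - S \<longrightarrow> u x t = 0))" using H unfolding K_def I_def by auto
    have Km[measurable]: "K \<in> sets borel" unfolding K_def by simp
    have Im[measurable]: "I \<in> sets borel" unfolding I_def by simp
    define U where "U z = indicator (K \<times> I) z * u (fst z) (snd z)" for z
    have Um: "U \<in> borel_measurable borel"
    proof -
      have "(K \<times> I) \<inter> space borel \<in> sets borel" unfolding K_def I_def
        by (simp add: open_Times borel_open)
      from borel_measurable_restrict_space_iff[OF this, THEN iffD1, OF fm]
      show ?thesis unfolding U_def real_scaleR_def .
    qed
    have U2[measurable]: "U \<in> borel_measurable (lborel \<Otimes>\<^sub>M lborel)" using Um by (simp add: lborel_prod)
    have UU: "U (x, t) = u x t" if "x \<in> K" "t \<in> I" for x t unfolding U_def using that by simp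
    have vm: "(\<lambda>y. U (y, t)) \<in> borel_measurable borel" for t
    proof -
      have "(\<lambda>y. U (y, t)) \<in> borel_measurable lborel" by measurable
      thus ?thesis by simp
    qed
    define e where "e = real N + s * p"
    define PhiU where "PhiU t = (\<integral>\<^sup>+x. ennreal (\<bar>U (x,t)\<bar> powr (p+al)) * indicator K x \<partial>lborel)" for t
    define LU where "LU t = (\<integral>\<^sup>+x. ennreal (\<bar>U (x,t)\<bar> powr p) * indicator K x \<partial>lborel)" for t
    define GU where "GU t = (\<integral>\<^sup>+x. (\<integral>\<^sup>+y. ennreal (\<bar>U (x,t) - U (y,t)\<bar> powr p / norm (x - y) powr e)
          * indicator K y \<partial>lborel) * indicator K x \<partial>lborel)" for t
    have LUm[measurable]: "LU \<in> borel_measurable lborel" unfolding LU_def by measurable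
    have GUm[measurable]: "GU \<in> borel_measurable lborel" unfolding GU_def by measurable
    have eqL: "par_Lq u K I p = (\<integral>\<^sup>+t. LU t * indicator I t \<partial>lborel)"
      unfolding par_Lq_def LU_def
      by (intro nn_integral_cong) (auto simp: indicator_def UU intro!: nn_integral_cong)
    have eqPhi: "par_Lq u K I (kappa N s p * p) = (\<integral>\<^sup>+t. PhiU t * indicator I t \<partial>lborel)"
      unfolding par_Lq_def PhiU_def kf(4)
      by (intro nn_integral_cong) (auto simp: indicator_def UU intro!: nn_integral_cong)
    have eqG: "par_gagliardo u K I s p = (\<integral>\<^sup>+t. GU t * indicator I t \<partial>lborel)"
      unfolding par_gagliardo_def GU_def e_def N_def
      by (intro nn_integral_cong) (auto simp: indicator_def UU intro!: nn_integral_cong)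

    define M where "M = par_esssup_L2_avg u K I"
    define m where "m = enn2real M"
    have Mm: "M = ennreal m" unfolding m_def using Mfin unfolding M_def by simp
    have m0: "m \<ge> 0" unfolding m_def by simp
    define k where "k = measure lborel K"
    have kval: "k = w * R powr real N"
    proof -
      have "emeasure lborel K = ennreal (w * R ^ N)" unfolding K_def w_def N_def using R by (intro emeasure_ball) simp
      hence "k = w * R ^ N" unfolding k_def measure_def using w R by simp
      thus ?thesis using R by (simp add: powr_realpow)
    qed
    have kpos: "k > 0" unfolding kval using w R by simp
    define Q where "Q t = (\<integral>\<^sup>+x. ennreal ((u x t)\<^sup>2) * indicator K x \<partial>lborel)" for t
    have esAE: "AE t in lborel. t \<in> I \<longrightarrow> Q t / ennreal k \<le> M"
    proof -
      have "AE t in restrict_space lborel I. Q t / ennreal k \<le> M"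
        unfolding M_def par_esssup_L2_avg_def Q_def k_def by (rule esssup_AE)
      thus ?thesis by (subst (asm) AE_restrict_space_iff) auto
    qed
    have Qb: "Q t \<le> ennreal (m * (w * R powr real N))" if "Q t / ennreal k \<le> M" for t
    proof -
      have "Q t \<noteq> \<infinity>"
      proof
        assume "Q t = \<infinity>"
        hence "Q t / ennreal k = \<infinity>" by (simp add: ennreal_divide_eq_top_iff)
        thus False using that Mm by (simp add: top_unique)
      qed
      then obtain q where q: "Q t = ennreal q" "q \<ge> 0" by (cases "Q t") auto
      have "ennreal (q / k) \<le> ennreal m" using that q kpos Mm by (simp add: divide_ennreal)
      hence "q / k \<le> m" using m0 by simp
      hence "q \<le> m * k" using kpos by (simp add: pos_divide_le_eq)
      thus ?thesis unfolding q kval using q by simp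
    qed
    define A where "A = C * R powr (s*p) * m powr (al/2)"
    define B where "B = C * (1 / d powr (real N + s*p)) * m powr (al/2)"
    have ptw: "AE t in lborel. t \<in> I \<longrightarrow> PhiU t \<le> ennreal A * GU t + ennreal B * LU t"
      using esAE supp
    proof eventually_elim
      case (elim t)
      show ?case
      proof
        assume tI: "t \<in> I"
        obtain S where S: "compact S" "S \<subseteq> ball x0 ((1 - d) * R)"
          and Sz: "AE x in lborel. x \<in> K - S \<longrightarrow> u x t = 0" using elim tI by blast
        have Sz': "AE x in lborel. x \<in> ball x0 R - S \<longrightarrow> U (x, t) = 0"
          using Sz unfolding K_def by eventually_elim (auto simp: UU[OF _ tI, unfolded K_def])
        have Qt: "(\<integral>\<^sup>+x. ennreal ((U (x,t))\<^sup>2) * indicator (ball x0 R) x \<partial>lborel) = Q t"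
          unfolding Q_def K_def by (intro nn_integral_cong) (auto simp: indicator_def UU[OF _ tI, unfolded K_def])
        have Qm: "(\<integral>\<^sup>+x. ennreal ((U (x,t))\<^sup>2) * indicator (ball x0 R) x \<partial>lborel)
               \<le> ennreal (m * (unit_ball_vol DIM('a) * R powr DIM('a)))"
          unfolding Qt using Qb[OF elim(1)[rule_format, OF tI]] unfolding w_def N_def .
        have aln': "al * real DIM('a) / 2 \<le> s * p" using kf(3) unfolding N_def .
        note xl = x_level[OF vm R d s p kf(1) kf(2) aln' S(2) Sz' m0 Qm]
        show "PhiU t \<le> ennreal A * GU t + ennreal B * LU t"
          using xl unfolding PhiU_def GU_def LU_def A_def B_def C_def K_def e_def w_def N_def .
      qed
    qed
    have gfin: "par_gagliardo u K I s p = ennreal (enn2real (par_gagliardo u K I s p))" using Gfin by simp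
    have lfin: "par_Lq u K I p = ennreal (enn2real (par_Lq u K I p))" using Lfin by simp
    define g' where "g' = enn2real (par_gagliardo u K I s p)"
    define l' where "l' = enn2real (par_Lq u K I p)"
    have Anonneg: "A \<ge> 0" unfolding A_def using Cpos R m0 by simp
    have Bnonneg: "B \<ge> 0" unfolding B_def using Cpos d m0 by simp
    have "par_Lq u K I (kappa N s p * p) = (\<integral>\<^sup>+t. PhiU t * indicator I t \<partial>lborel)" by (rule eqPhi)
    also have "\<dots> \<le> (\<integral>\<^sup>+t. (ennreal A * GU t + ennreal B * LU t) * indicator I t \<partial>lborel)"
      by (rule nn_integral_mono_AE) (use ptw in \<open>eventually_elim, auto simp: indicator_def\<close>)
    also have "\<dots> = (\<integral>\<^sup>+t. ennreal A * (GU t * indicator I t) + ennreal B * (LU t * indicator I t) \<partial>lborel)"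
      by (simp add: distrib_right mult.assoc)
    also have "\<dots> = (\<integral>\<^sup>+t. ennreal A * (GU t * indicator I t) \<partial>lborel) + (\<integral>\<^sup>+t. ennreal B * (LU t * indicator I t) \<partial>lborel)"
      by (intro nn_integral_add) measurable
    also have "\<dots> = ennreal A * (\<integral>\<^sup>+t. GU t * indicator I t \<partial>lborel) + ennreal B * (\<integral>\<^sup>+t. LU t * indicator I t \<partial>lborel)"
      by (subst nn_integral_cmult, measurable)+
    also have "\<dots> = ennreal A * ennreal g' + ennreal B * ennreal l'"
      unfolding eqG[symmetric] eqL[symmetric] g'_def l'_def using gfin lfin by simp
    also have "\<dots> = ennreal (A * g' + B * l')"
      using Anonneg Bnonneg by (subst ennreal_plus) (auto simp: g'_def l'_def ennreal_mult)
    also have "A * g' + B * l' = C * (R powr (s * p) * g' + 1 / d powr (real N + s * p) * l') * m powr (al/2)"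
      unfolding A_def B_def by (simp add: algebra_simps)
    finally have final: "par_Lq u K I (kappa N s p * p) \<le> ennreal (C * (R powr (s * p) * g' + 1 / d powr (real N + s * p) * l') * m powr (al/2))" .
    have k5: "(kappa_star DIM('a) s p - 1) / kappa_star DIM('a) s p = al / 2" using kf(5) unfolding N_def .
    show "par_Lq u (ball x0 R) {t1<..<t2} (kappa DIM('a) s p * p)
        \<le> ennreal (C * (R powr (s * p) * enn2real (par_gagliardo u (ball x0 R) {t1<..<t2} s p)
                   + 1 / d powr (real DIM('a) + s * p) * enn2real (par_Lq u (ball x0 R) {t1<..<t2} p))
             * enn2real (par_esssup_L2_avg u (ball x0 R) {t1<..<t2})
                 powr ((kappa_star DIM('a) s p - 1) / kappa_star DIM('a) s p))"
      unfolding k5 using final unfolding K_def I_def N_def g'_def l'_def m_def M_def .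
  qed
qed

end
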